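(* Let $K$ be a field with algebraic closure $\overline{K}$, $U=\{u_1,\dots,u_d\}$ parameters and $X=\{x_1,\dots,x_n\}$ variables ordered $u_1\prec\dots\prec u_d\prec x_1\prec\dots\prec x_n$. Let $\mathbf{P}$ be a parametric system in $K[U][X]$ and $\{\mathbf{C}_1,\dots,\mathbf{C}_m\}$ a Wu's decomposition of $\mathbf{P}$ in $K[U][X]$. Let $\mathbb{S}$ be the set of those $\mathbf{C}_i$ that are non-contradictory ascending chains and $\mathbb{CS}$ the set of those $\mathbf{C}_i$ that are contradictory ascending chains. Then for every $a\in\overline{K}^d\setminus\bigcup_{\mathbf{CS}\in\mathbb{CS}}\mathrm{V}^U(\mathbf{CS})$, \[\mathrm{V}(\mathbf{P}(a))=\bigcup_{\mathbf{C}\in\mathbb{S}}\mathrm{V}(\mathbf{C}(a)\setminus\mathrm{I}(\mathbf{C})(a)).\]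
   Context: A parametric system is a non-empty finite subset of $K[U][X]\setminus K[X]$. For $F\in K[U][X]\setminus\{0\}$, its class is the largest $p$ with $\deg(F,x_p)>0$; if it is $p>0$ the main variable is $x_p$ and, writing $F=C_0x_p^m+\dots+C_m$ with $C_0\ne0$, the initial is $\mathrm{I}(F)=C_0$. A non-contradictory ascending chain is a set $\{C_1,\dots,C_t\}$ with $0<\mathrm{cls}(C_1)<\dots<\mathrm{cls}(C_t)$ and each $C_i$ reduced w.r.t. the earlier ones (degree in $\mathrm{mvar}(C_j)$ less than $\deg(C_j,\mathrm{mvar}(C_j))$ for $j<i$); a contradictory ascending chain is a set $\{F\}$ with $0\neq F\in K[U]$. $\mathrm{I}(\mathbf{C})=\prod_i\mathrm{I}(C_i)$. An ascending chain $\mathbf{C}$ is a characteristic set of $\mathbf{P}$ if $\mathbf{C}\subset\langle\mathbf{P}\rangle_{K[U][X]}$ and the successive pseudo-remainder (w.r.t. main variables, last element first) of every element of $\mathbf{P}$ by $\mathbf{C}$ is $0$. A Wu's decomposition of $\mathbf{P}$ is the finite set of ascending chains produced by Wu's method: compute a characteristic set $\mathbf{C}$ of $\mathbf{P}$; if $\mathbf{C}=\{C_1,\dots,C_t\}$ is non-contradictory, recursively apply the method to each $\mathbf{P}\cup\mathbf{C}\cup\{\mathrm{I}(C_i)\}$, $1\le i\le t$; all characteristic sets obtained form the decomposition. For $a\in\overline{K}^d$, $F(a)$ denotes substitution of $a$ for $U$; $\mathrm{V}^U(\mathbf{B})$ is the common zero set in $\overline{K}^d$ of $\mathbf{B}\subset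 K[U]$; for subsets of $\overline{K}[X]$, $\mathrm{V}(\cdot)$ is the common zero set in $\overline{K}^n$ and $\mathrm{V}(\mathbf{Q}\setminus H)=\mathrm{V}(\mathbf{Q})\setminus\mathrm{V}(H)$. *)

theory Defs
  imports "HOL-Library.Poly_Mapping" "HOL-Algebra.Algebraic_Closure_Type"
begin

(* Variables: Inl i stands for the parameter u_i (1 <= i <= d),
   Inr j stands for the variable x_j (1 <= j <= n). *)

type_synonym var = "nat + nat"
type_synonym 'k mpoly = "(var \<Rightarrow>\<^sub>0 nat) \<Rightarrow>\<^sub>0 'k"

definition vars :: "'k::zero mpoly \<Rightarrow> var set" where
  "vars F = (\<Union>m\<in>Poly_Mapping.keys F. Poly_Mapping.keys m)"

definition KUX :: "nat \<Rightarrow> nat \<Rightarrow> 'k::zero mpoly set" where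
  "KUX d n = {F. vars F \<subseteq> Inl ` {1..d} \<union> Inr ` {1..n}}"

definition KU :: "nat \<Rightarrow> 'k::zero mpoly set" where
  "KU d = {F. vars F \<subseteq> Inl ` {1..d}}"

definition KX :: "nat \<Rightarrow> 'k::zero mpoly set" where
  "KX n = {F. vars F \<subseteq> Inr ` {1..n}}"

definition deg :: "'k::zero mpoly \<Rightarrow> var \<Rightarrow> nat" where
  "deg F v = Max (insert 0 ((\<lambda>m. Poly_Mapping.lookup m v) ` Poly_Mapping.keys F))"

definition cls :: "'k::zero mpoly \<Rightarrow> nat" where
  "cls F = Max (insert 0 {p. deg F (Inr p) > 0})"

definition init :: "'k::comm_ring_1 mpoly \<Rightarrow> 'k mpoly" where
  "init F = (let v = Inr (cls F); e = deg F v in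
     (\<Sum>m\<in>{m\<in>Poly_Mapping.keys F. Poly_Mapping.lookup m v = e}.
        Poly_Mapping.single (m - Poly_Mapping.single v e) (Poly_Mapping.lookup F m)))"

definition prem :: "'k::comm_ring_1 mpoly \<Rightarrow> 'k mpoly \<Rightarrow> 'k mpoly" where
  "prem G F = (if cls F = 0 then 0 else
     (let v = Inr (cls F); m = deg F v; s = (deg G v + 1) - m in
       THE R. deg R v < m \<and> (\<exists>Q. init F ^ s * G = Q * F + R)))"

definition noncontra_chain :: "'k::zero mpoly set \<Rightarrow> bool" where
  "noncontra_chain C \<longleftrightarrow> finite C \<and> C \<noteq> {} \<and> (\<forall>c\<in>C. cls c > 0) \<and> inj_on cls C \<and>
     (\<forall>c\<in>C. \<forall>c'\<in>C. cls c' < cls c \<longrightarrow> deg c (Inr (cls c')) < deg c' (Inr (cls c')))"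

definition contra_chain :: "nat \<Rightarrow> 'k::zero mpoly set \<Rightarrow> bool" where
  "contra_chain d C \<longleftrightarrow> (\<exists>F. C = {F} \<and> F \<noteq> 0 \<and> F \<in> KU d)"

definition asc_chain :: "nat \<Rightarrow> 'k::zero mpoly set \<Rightarrow> bool" where
  "asc_chain d C \<longleftrightarrow> noncontra_chain C \<or> contra_chain d C"

definition chain_init :: "'k::comm_ring_1 mpoly set \<Rightarrow> 'k mpoly" where
  "chain_init C = (\<Prod>c\<in>C. init c)"

(* successive pseudo-remainder of G by C, last element (highest class) first *)
definition prem_chain :: "'k::comm_ring_1 mpoly \<Rightarrow> 'k mpoly set \<Rightarrow> 'k mpoly" where
  "prem_chain G C = foldr (\<lambda>c r. prem r c) (sorted_key_list_of_set cls C) G"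

definition ideal_KUX :: "nat \<Rightarrow> nat \<Rightarrow> 'k::comm_ring_1 mpoly set \<Rightarrow> 'k mpoly set" where
  "ideal_KUX d n P = {\<Sum>p\<in>S. q p * p | S q. finite S \<and> S \<subseteq> P \<and> (\<forall>p\<in>S. q p \<in> KUX d n)}"

definition char_set :: "nat \<Rightarrow> nat \<Rightarrow> 'k::comm_ring_1 mpoly set \<Rightarrow> 'k mpoly set \<Rightarrow> bool" where
  "char_set d n P C \<longleftrightarrow> asc_chain d C \<and> C \<subseteq> ideal_KUX d n P \<and> (\<forall>G\<in>P. prem_chain G C = 0)"

(* wu_decomp d n P D : D is a Wu's decomposition of P (a possible output of Wu's method) *)
inductive wu_decomp :: "nat \<Rightarrow> nat \<Rightarrow> 'k::comm_ring_1 mpoly set \<Rightarrow> 'k mpoly set set \<Rightarrow> bool"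
  for d n where
  contra: "char_set d n P C \<Longrightarrow> contra_chain d C \<Longrightarrow> wu_decomp d n P {C}"
| noncontra: "char_set d n P C \<Longrightarrow> noncontra_chain C \<Longrightarrow>
     (\<forall>c\<in>C. wu_decomp d n (P \<union> C \<union> {init c}) (Ds c)) \<Longrightarrow>
     wu_decomp d n P ({C} \<union> (\<Union>c\<in>C. Ds c))"

definition parametric_system :: "nat \<Rightarrow> nat \<Rightarrow> 'k::zero mpoly set \<Rightarrow> bool" where
  "parametric_system d n P \<longleftrightarrow> P \<noteq> {} \<and> finite P \<and> P \<subseteq> KUX d n - KX n"

definition eval :: "(var \<Rightarrow> 'k::field alg_closure) \<Rightarrow> 'k mpoly \<Rightarrow> 'k alg_closure" where
  "eval pt F = (\<Sum>m\<in>Poly_Mapping.keys F. to_ac (Poly_Mapping.lookup F m) * (\<Prod>v\<in>Poly_Mapping.keys m. pt v ^ Poly_Mapping.lookup m v))"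

definition pt :: "(nat \<Rightarrow> 'a) \<Rightarrow> (nat \<Rightarrow> 'a) \<Rightarrow> var \<Rightarrow> 'a" where
  "pt a b = case_sum a b"

definition VU :: "'k::field mpoly set \<Rightarrow> (nat \<Rightarrow> 'k alg_closure) set" where
  "VU B = {a. \<forall>F\<in>B. eval (pt a (\<lambda>_. 0)) F = 0}"

definition V_spec :: "(nat \<Rightarrow> 'k::field alg_closure) \<Rightarrow> 'k mpoly set \<Rightarrow> 'k mpoly \<Rightarrow> (nat \<Rightarrow> 'k alg_closure) set" where
  "V_spec a Q H = {b. (\<forall>F\<in>Q. eval (pt a b) F = 0) \<and> eval (pt a b) H \<noteq> 0}"

definition V :: "(nat \<Rightarrow> 'k::field alg_closure) \<Rightarrow> 'k mpoly set \<Rightarrow> (nat \<Rightarrow> 'k alg_closure) set" where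
  "V a Q = {b. \<forall>F\<in>Q. eval (pt a b) F = 0}"

end

theory Submission imports Defs "HOL-Computational_Algebra.Polynomial" begin


abbreviation "lk \<equiv> Poly_Mapping.lookup"
abbreviation "ks \<equiv> Poly_Mapping.keys"
abbreviation "sg \<equiv> Poly_Mapping.single"

definition mono :: "('v \<Rightarrow> 'r::comm_semiring_1) \<Rightarrow> ('v \<Rightarrow>\<^sub>0 nat) \<Rightarrow> 'r" where
  "mono x m = (\<Prod>v\<in>ks m. x v ^ lk m v)"

lemma mono_superset:
  assumes "finite S" "ks m \<subseteq> S"
  shows "mono x m = (\<Prod>v\<in>S. x v ^ lk m v)"
  unfolding mono_def
  by (rule prod.mono_neutral_left) (use assms in \<open>auto simp: in_keys_iff\<close>)

lemma mono_add: "mono x (a + b) = mono x a * mono x b"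
proof -
  let ?S = "ks a \<union> ks b"
  have "mono x (a + b) = (\<Prod>v\<in>?S. x v ^ lk (a+b) v)"
    by (rule mono_superset) (auto dest: set_mp[OF Poly_Mapping.keys_add])
  also have "\<dots> = (\<Prod>v\<in>?S. x v ^ lk a v) * (\<Prod>v\<in>?S. x v ^ lk b v)"
    by (simp add: lookup_add power_add prod.distrib)
  also have "\<dots> = mono x a * mono x b"
    by (simp add: mono_superset[symmetric])
  finally show ?thesis .
qed

lemma mono_zero [simp]: "mono x 0 = 1"
  by (simp add: mono_def)

definition ev :: "('k::zero \<Rightarrow> 'r::comm_ring_1) \<Rightarrow> ('v \<Rightarrow> 'r) \<Rightarrow> (('v \<Rightarrow>\<^sub>0 nat) \<Rightarrow>\<^sub>0 'k) \<Rightarrow> 'r" where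
  "ev f x F = (\<Sum>m\<in>ks F. f (lk F m) * mono x m)"

locale hom = fixes f :: "'k::comm_ring_1 \<Rightarrow> 'r::comm_ring_1"
  assumes f0: "f 0 = 0" and fadd: "f (a + b) = f a + f b"
    and fmult: "f (a * b) = f a * f b" and f1: "f 1 = 1"
begin

lemma ev_superset:
  assumes "finite S" "ks F \<subseteq> S"
  shows "ev f x F = (\<Sum>m\<in>S. f (lk F m) * mono x m)"
  unfolding ev_def
  by (rule sum.mono_neutral_left) (use assms in \<open>auto simp: in_keys_iff f0\<close>)

lemma ev_add: "ev f x (F + G) = ev f x F + ev f x G"
proof -
  let ?S = "ks F \<union> ks G"
  have "ev f x (F + G) = (\<Sum>m\<in>?S. f (lk (F+G) m) * mono x m)"
    by (rule ev_superset) (auto dest: set_mp[OF Poly_Mapping.keys_add])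
  also have "\<dots> = (\<Sum>m\<in>?S. f (lk F m) * mono x m) + (\<Sum>m\<in>?S. f (lk G m) * mono x m)"
    by (simp add: lookup_add fadd distrib_right sum.distrib)
  also have "\<dots> = ev f x F + ev f x G"
    by (simp add: ev_superset[symmetric])
  finally show ?thesis .
qed

lemma ev_zero [simp]: "ev f x 0 = 0"
  by (simp add: ev_def)

lemma ev_sum: "ev f x (\<Sum>i\<in>A. g i) = (\<Sum>i\<in>A. ev f x (g i))"
  by (induction A rule: infinite_finite_induct) (auto simp: ev_add)

lemma ev_single: "ev f x (sg m c) = f c * mono x m"
  by (cases "c = 0") (auto simp: ev_def f0)

lemma ev_uminus: "ev f x (- F) = - ev f x F"
  using ev_add[of x "-F" F] by (simp add: eq_neg_iff_add_eq_0)

lemma ev_diff: "ev f x (F - G) = ev f x F - ev f x G"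
  using ev_add[of x F "-G"] by (simp add: ev_uminus)

lemma ev_one [simp]: "ev f x 1 = 1"
  using ev_single[of x 0 1] by (simp add: f1)

end

lemma sum_single: "F = (\<Sum>m\<in>ks F. sg m (lk F m))"
  by (rule poly_mapping_eqI) (simp add: lookup_sum lookup_single when_def in_keys_iff)

context hom begin

lemma ev_mult: "ev f x (F * G) = ev f x F * ev f x G"
proof -
  have "F * G = (\<Sum>m\<in>ks F. sg m (lk F m)) * (\<Sum>m\<in>ks G. sg m (lk G m))"
    using sum_single[of F] sum_single[of G] by simp
  also have "\<dots> = (\<Sum>m1\<in>ks F. \<Sum>m2\<in>ks G. sg (m1 + m2) (lk F m1 * lk G m2))"
    by (simp add: sum_product mult_single)
  finally have "ev f x (F * G) = (\<Sum>m1\<in>ks F. \<Sum>m2\<in>ks G. f (lk F m1) * mono x m1 * (f (lk G m2) * mono x m2))"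
    by (simp add: ev_sum ev_single fmult mono_add mult_ac)
  also have "\<dots> = ev f x F * ev f x G"
    by (simp add: ev_def sum_product)
  finally show ?thesis .
qed

lemma ev_power: "ev f x (F ^ k) = ev f x F ^ k"
  by (induction k) (auto simp: ev_mult)

lemma ev_prod: "ev f x (\<Prod>i\<in>A. g i) = (\<Prod>i\<in>A. ev f x (g i))"
  by (induction A rule: infinite_finite_induct) (auto simp: ev_mult)

end


lemma hom_to_ac: "hom to_ac" by standard auto

lemma eval_ev: "eval p F = ev to_ac p F"
  by (simp add: eval_def ev_def mono_def)

definition Var :: "'v \<Rightarrow> (('v \<Rightarrow>\<^sub>0 nat) \<Rightarrow>\<^sub>0 'k::comm_ring_1)" where
  "Var w = sg (sg w 1) 1"

lemma Var_power: "Var w ^ k = sg (sg w k) 1"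
  by (induction k) (auto simp: Var_def mult_single single_add[symmetric] add.commute)

lemma prod_single1: "(\<Prod>i\<in>A. sg (g i) (1::'k::comm_semiring_1)) = sg (\<Sum>i\<in>A. g i) 1"
  by (induction A rule: infinite_finite_induct) (auto simp: mult_single)

lemma mono_Var: "mono Var m = (sg m 1 :: ('v \<Rightarrow>\<^sub>0 nat) \<Rightarrow>\<^sub>0 'k::comm_ring_1)"
proof -
  have "mono Var m = (\<Prod>w\<in>ks m. sg (sg w (lk m w)) (1::'k))"
    by (simp add: mono_def Var_power)
  also have "\<dots> = sg (\<Sum>w\<in>ks m. sg w (lk m w)) 1" by (rule prod_single1)
  also have "\<dots> = sg m 1" using sum_single[of m] by simp
  finally show ?thesis .
qed

lemma mono_cong: "(\<And>w. w \<in> ks m \<Longrightarrow> x w = z w) \<Longrightarrow> mono x m = mono z m"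
  by (simp add: mono_def)

definition rest :: "'v \<Rightarrow> ('v \<Rightarrow>\<^sub>0 nat) \<Rightarrow> ('v \<Rightarrow>\<^sub>0 nat)" where
  "rest v m = m - sg v (lk m v)"

lemma rest_split: "m = rest v m + sg v (lk m v)"
  by (rule poly_mapping_eqI) (auto simp: rest_def lookup_add lookup_minus lookup_single when_def)

lemma lk_rest: "lk (rest v m) w = (if w = v then 0 else lk m w)"
  by (auto simp: rest_def lookup_minus lookup_single when_def)

lemma v_notin_rest: "v \<notin> ks (rest v m)"
  by (simp add: in_keys_iff lk_rest)

lemma mono_sg: "mono x (sg v k) = x v ^ k"
  by (cases "k = 0") (auto simp: mono_def)

lemma mono_split: "mono x m = mono x (rest v m) * x v ^ lk m v"
  by (subst rest_split[of m v]) (simp add: mono_add mono_sg lk_rest)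


lemma hom_sg0: "hom (\<lambda>c::'k::comm_ring_1. sg (0::'m::comm_monoid_add) c)"
  by standard (auto simp: single_add mult_single)

lemma hom_monom0: "hom (\<lambda>c::'k::comm_ring_1. monom (sg (0::'m::comm_monoid_add) c) 0)"
  by standard (auto simp: single_add mult_single add_monom mult_monom)

definition vfree :: "'v \<Rightarrow> (('v \<Rightarrow>\<^sub>0 nat) \<Rightarrow>\<^sub>0 'k::zero) \<Rightarrow> bool" where
  "vfree v F \<longleftrightarrow> (\<forall>m\<in>ks F. lk m v = 0)"

definition rho :: "'v \<Rightarrow> (('v \<Rightarrow>\<^sub>0 nat) \<Rightarrow>\<^sub>0 'k::comm_ring_1) \<Rightarrow> (('v \<Rightarrow>\<^sub>0 nat) \<Rightarrow>\<^sub>0 'k)" where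
  "rho v F = ev (\<lambda>c. sg 0 c) (\<lambda>w. if w = v then 0 else Var w) F"

lemma rest_id: "lk m v = 0 \<Longrightarrow> rest v m = m"
  using rest_split[of m v, symmetric] by simp

lemma rho_mono: "mono (\<lambda>w. if w = v then 0 else Var w) m =
   (if lk m v = 0 then sg m 1 else (0::('v \<Rightarrow>\<^sub>0 nat) \<Rightarrow>\<^sub>0 'k::comm_ring_1))"
proof -
  have "mono (\<lambda>w. if w = v then 0 else Var w) (rest v m) = (mono Var (rest v m) :: ('v \<Rightarrow>\<^sub>0 nat) \<Rightarrow>\<^sub>0 'k)"
    by (rule mono_cong) (metis v_notin_rest)
  then show ?thesis
    by (subst mono_split[of _ _ v]) (auto simp: mono_Var rest_id power_0_left)
qed

lemma rho_expl: "rho v F = (\<Sum>m\<in>ks F. if lk m v = 0 then sg m (lk F m) else 0)"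
proof -
  show ?thesis
    unfolding rho_def ev_def rho_mono by (rule sum.cong) (auto simp: mult_single)
qed

lemma rho_id: "vfree v F \<Longrightarrow> rho v F = F"
  unfolding rho_expl vfree_def
  by (subst (2) sum_single[of F]) (rule sum.cong, auto)

lemma vfree_sum:
  assumes "\<And>i. i \<in> A \<Longrightarrow> vfree v (g i)" shows "vfree v (\<Sum>i\<in>A. g i)"
  unfolding vfree_def
proof
  fix m assume "m \<in> ks (\<Sum>i\<in>A. g i)"
  then have "m \<in> (\<Union>i\<in>A. ks (g i))" using keys_sum[of g A] by (rule subsetD[rotated])
  then obtain i where "i \<in> A" "m \<in> ks (g i)" by (rule UN_E)
  with assms show "lk m v = 0" unfolding vfree_def by blast
qed

lemma vfree_sg: "lk m v = 0 \<Longrightarrow> vfree v (sg m c)"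
  by (simp add: vfree_def)

lemma vfree_zero [simp]: "vfree v 0"
  by (simp add: vfree_def)

lemma rho_vfree: "vfree v (rho v F)"
  unfolding rho_expl by (rule vfree_sum) (auto intro: vfree_sg)

definition phi :: "'v \<Rightarrow> (('v \<Rightarrow>\<^sub>0 nat) \<Rightarrow>\<^sub>0 'k::comm_ring_1) \<Rightarrow> (('v \<Rightarrow>\<^sub>0 nat) \<Rightarrow>\<^sub>0 'k) poly" where
  "phi v F = ev (\<lambda>c. monom (sg 0 c) 0) (\<lambda>w. if w = v then monom 1 1 else monom (Var w) 0) F"

lemma prod_monom0: "(\<Prod>i\<in>A. monom (g i) 0) = monom (\<Prod>i\<in>A. g i) 0"
  apply (induction A rule: infinite_finite_induct)
  apply simp
  apply simp
  apply (simp add: mult_monom)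
  done

lemma mono_monom0: "mono (\<lambda>w. monom (g w) 0) m = monom (mono g m) 0"
  unfolding mono_def monom_power mult_0 by (rule prod_monom0)

lemma phi_mono: "mono (\<lambda>w. if w = v then monom 1 1 else monom (Var w) 0) m =
   monom (sg (rest v m) 1 :: ('v \<Rightarrow>\<^sub>0 nat) \<Rightarrow>\<^sub>0 'k::comm_ring_1) (lk m v)"
proof -
  have "mono (\<lambda>w. if w = v then monom 1 1 else monom (Var w) 0) (rest v m) =
        mono (\<lambda>w. monom (Var w :: ('v \<Rightarrow>\<^sub>0 nat) \<Rightarrow>\<^sub>0 'k) 0) (rest v m)"
    by (rule mono_cong) (metis v_notin_rest)
  then show ?thesis
    by (subst mono_split[of _ _ v]) (simp add: mono_monom0 mono_Var monom_power mult_monom)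
qed

lemma phi_expl: "phi v F = (\<Sum>m\<in>ks F. monom (sg (rest v m) (lk F m)) (lk m v))"
  unfolding phi_def ev_def phi_mono by (rule sum.cong) (auto simp: mult_monom mult_single)

lemma coeff_phi: "coeff (phi v F) i = (\<Sum>m\<in>{m\<in>ks F. lk m v = i}. sg (rest v m) (lk F m))"
  unfolding phi_expl coeff_sum coeff_monom by (simp add: sum.inter_filter)

lemma vfree_coeff_phi: "vfree v (coeff (phi v F) i)"
  unfolding coeff_phi by (rule vfree_sum) (auto intro: vfree_sg simp: lk_rest)

lemma coeff_phi_nz: "coeff (phi v F) i \<noteq> 0 \<longleftrightarrow> (\<exists>m\<in>ks F. lk m v = i)"
proof
  assume "coeff (phi v F) i \<noteq> 0"
  then show "\<exists>m\<in>ks F. lk m v = i"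
  proof (rule contrapos_np)
    assume "\<not> (\<exists>m\<in>ks F. lk m v = i)"
    then have "{m\<in>ks F. lk m v = i} = {}" by auto
    then show "coeff (phi v F) i = 0" unfolding coeff_phi by (simp only: sum.empty)
  qed
next
  assume "\<exists>m\<in>ks F. lk m v = i"
  then obtain m0 where m0: "m0 \<in> ks F" "lk m0 v = i" by blast
  have "lk (coeff (phi v F) i) (rest v m0) = (\<Sum>m\<in>{m\<in>ks F. lk m v = i}. if m = m0 then lk F m0 else 0)"
    unfolding coeff_phi lookup_sum
  proof (rule sum.cong)
    fix m assume m: "m \<in> {m\<in>ks F. lk m v = i}"
    have "rest v m = rest v m0 \<longleftrightarrow> m = m0"
    proof
      assume "rest v m = rest v m0"
      then have "rest v m + sg v (lk m v) = rest v m0 + sg v (lk m0 v)" using m m0 by simp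
      then show "m = m0" by (simp only: rest_split[symmetric])
    qed simp
    then show "lk (sg (rest v m) (lk F m)) (rest v m0) = (if m = m0 then lk F m0 else 0)"
      by (simp add: lookup_single when_def)
  qed simp
  also have "\<dots> = lk F m0" using m0 by (simp add: sum.delta)
  finally have "lk (coeff (phi v F) i) (rest v m0) \<noteq> 0" using m0(1) by (simp add: in_keys_iff)
  then show "coeff (phi v F) i \<noteq> 0" by auto
qed

lemma finite_lkv: "finite ((\<lambda>m. lk m v) ` ks F)" by simp

lemma deg_ge: "m \<in> ks F \<Longrightarrow> lk m v \<le> deg F v"
  unfolding deg_def by (rule Max_ge) auto

lemma deg_le: "(\<And>m. m \<in> ks F \<Longrightarrow> lk m v \<le> k) \<Longrightarrow> deg F v \<le> k"
  unfolding deg_def by (subst Max_le_iff) auto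

lemma deg_ex: "F \<noteq> 0 \<Longrightarrow> \<exists>m\<in>ks F. lk m v = deg F v"
proof -
  assume "F \<noteq> 0"
  then obtain m1 where m1: "m1 \<in> ks F" by (metis all_not_in_conv keys_eq_empty)
  have "deg F v \<in> insert 0 ((\<lambda>m. lk m v) ` ks F)"
    unfolding deg_def by (rule Max_in) auto
  then show ?thesis
  proof
    assume "deg F v = 0"
    with deg_ge[OF m1, of v] have "lk m1 v = deg F v" by simp
    with m1 show ?thesis by blast
  next
    assume "deg F v \<in> (\<lambda>m. lk m v) ` ks F"
    then show ?thesis by (metis (no_types, lifting) imageE)
  qed
qed

lemma deg_zero [simp]: "deg 0 v = 0"
  by (simp add: deg_def)

lemma degree_phi: "degree (phi v F) = deg F v"
proof (cases "F = 0")
  case True then show ?thesis by (simp add: phi_def ev_def)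
next
  case False
  then obtain m0 where "m0 \<in> ks F" "lk m0 v = deg F v" using deg_ex by blast
  then have "coeff (phi v F) (deg F v) \<noteq> 0" by (auto simp: coeff_phi_nz)
  then have 1: "deg F v \<le> degree (phi v F)" and "phi v F \<noteq> 0" by (auto intro: le_degree)
  then have "coeff (phi v F) (degree (phi v F)) \<noteq> 0" by simp
  then have "\<exists>m\<in>ks F. lk m v = degree (phi v F)" by (simp only: coeff_phi_nz)
  then obtain m where "m \<in> ks F" "lk m v = degree (phi v F)" by blast
  then have "degree (phi v F) \<le> deg F v" using deg_ge[of m F v] by simp
  with 1 show ?thesis by simp
qed

definition psi :: "'v \<Rightarrow> (('v \<Rightarrow>\<^sub>0 nat) \<Rightarrow>\<^sub>0 'k::comm_ring_1) poly \<Rightarrow> (('v \<Rightarrow>\<^sub>0 nat) \<Rightarrow>\<^sub>0 'k)" where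
  "psi v p = poly p (Var v)"

lemma psi_phi: "psi v (phi v F) = F"
proof -
  have "psi v (phi v F) = (\<Sum>m\<in>ks F. sg m (lk F m))"
    unfolding psi_def phi_expl poly_sum poly_monom Var_power
  proof (rule sum.cong)
    fix m show "sg (rest v m) (lk F m) * sg (sg v (lk m v)) 1 = sg m (lk F m)"
      using rest_split[of m v, symmetric] by (simp add: mult_single)
  qed simp
  then show ?thesis using sum_single[of F] by simp
qed

lemma deg_psi:
  assumes "\<And>i. vfree v (coeff r i)"
  shows "deg (psi v r) v \<le> degree r"
proof (rule deg_le)
  fix m assume "m \<in> ks (psi v r)"
  then have "m \<in> (\<Union>i\<in>{..degree r}. ks (coeff r i * Var v ^ i))"
    unfolding psi_def poly_altdef using keys_sum by (rule subsetD[rotated])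
  then obtain i where i: "i \<le> degree r" "m \<in> ks (coeff r i * Var v ^ i)" by blast
  then obtain a where "a \<in> ks (coeff r i)" "m = a + sg v i"
    using keys_mult[of "coeff r i" "Var v ^ i"] by (auto simp: Var_power split: if_splits)
  with assms[of i] i show "lk m v \<le> degree r"
    by (auto simp: vfree_def lookup_add)
qed




instantiation sum :: (linorder, linorder) linorder
begin
definition less_eq_sum :: "'a + 'b \<Rightarrow> 'a + 'b \<Rightarrow> bool" where
  "less_eq_sum x y = (case x of Inl a \<Rightarrow> (case y of Inl b \<Rightarrow> a \<le> b | Inr _ \<Rightarrow> True)
                          | Inr a \<Rightarrow> (case y of Inl _ \<Rightarrow> False | Inr b \<Rightarrow> a \<le> b))"
definition less_sum :: "'a + 'b \<Rightarrow> 'a + 'b \<Rightarrow> bool" where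
  "less_sum x y = (x \<le> y \<and> \<not> y \<le> x)"
instance
proof
  fix x y z :: "'a + 'b"
  show "(x < y) = (x \<le> y \<and> \<not> y \<le> x)" by (simp add: less_sum_def)
  show "x \<le> x" by (cases x) (auto simp: less_eq_sum_def)
  show "x \<le> y \<Longrightarrow> y \<le> z \<Longrightarrow> x \<le> z"
    by (cases x; cases y; cases z) (auto simp: less_eq_sum_def)
  show "x \<le> y \<Longrightarrow> y \<le> x \<Longrightarrow> x = y"
    by (cases x; cases y) (auto simp: less_eq_sum_def)
  show "x \<le> y \<or> y \<le> x"
    by (cases x; cases y) (auto simp: less_eq_sum_def)
qed
end

lemma "(a::'k::field mpoly) * b = 0 \<Longrightarrow> a = 0 \<or> b = 0"
  by simp

definition mp :: "var \<Rightarrow> 'k::comm_ring_1 mpoly poly \<Rightarrow> 'k mpoly poly" where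
  "mp v p = map_poly (rho v) p"

lemma rho_0: "rho v 0 = 0" by (simp add: rho_def ev_def)

lemma hom_rho_add: "rho v (a + b) = rho v a + rho v b"
  and hom_rho_mult: "rho v (a * b) = rho v a * rho v b"
  and hom_rho_sum: "rho v (sum g A) = (\<Sum>i\<in>A. rho v (g i))"
  and hom_rho_power: "rho v (a ^ k) = rho v a ^ k"
proof -
  show "rho v (a + b) = rho v a + rho v b" unfolding rho_def by (rule hom.ev_add[OF hom_sg0])
  show "rho v (a * b) = rho v a * rho v b" unfolding rho_def by (rule hom.ev_mult[OF hom_sg0])
  show "rho v (sum g A) = (\<Sum>i\<in>A. rho v (g i))" unfolding rho_def by (rule hom.ev_sum[OF hom_sg0])
  show "rho v (a ^ k) = rho v a ^ k" unfolding rho_def by (rule hom.ev_power[OF hom_sg0])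
qed

lemma coeff_mp: "coeff (mp v p) i = rho v (coeff p i)"
  unfolding mp_def by (rule coeff_map_poly) (rule rho_0)

lemma mp_add: "mp v (p + q) = mp v p + mp v q"
  by (rule poly_eqI) (simp add: coeff_mp hom_rho_add)

lemma mp_mult: "mp v (p * q) = mp v p * mp v q"
  by (rule poly_eqI) (simp add: coeff_mp coeff_mult hom_rho_sum hom_rho_mult)

lemma mp_smult: "mp v (smult c p) = smult (rho v c) (mp v p)"
  by (rule poly_eqI) (simp add: coeff_mp hom_rho_mult)

lemma mp_phi: "mp v (phi v F) = phi v F"
  by (rule poly_eqI) (simp add: coeff_mp rho_id vfree_coeff_phi)

lemma mp_zero: "mp v 0 = 0" by (simp add: mp_def)

lemma degree_mp: "degree (mp v p) \<le> degree p"
  by (rule degree_le) (simp add: coeff_mp coeff_eq_0 rho_0)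

lemma coeff_mp_vfree: "vfree v (coeff (mp v p) i)"
  by (simp add: coeff_mp rho_vfree)

lemma phi_hom:
  shows phi_add: "phi v (a + b) = phi v a + phi v b"
  and phi_mult: "phi v (a * b) = phi v a * phi v b"
  and phi_diff: "phi v (a - b) = phi v a - phi v b"
proof -
  show "phi v (a + b) = phi v a + phi v b" unfolding phi_def by (rule hom.ev_add[OF hom_monom0])
  show "phi v (a * b) = phi v a * phi v b" unfolding phi_def by (rule hom.ev_mult[OF hom_monom0])
  show "phi v (a - b) = phi v a - phi v b" unfolding phi_def by (rule hom.ev_diff[OF hom_monom0])
qed




lemma finite_vars: "finite (vars F)"
  by (simp add: vars_def)

lemma deg_pos_vars: "0 < deg F w \<Longrightarrow> w \<in> vars F"
proof -
  assume a: "0 < deg F w"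
  then have "F \<noteq> 0" by (auto)
  then obtain m where "m \<in> ks F" "lk m w = deg F w" using deg_ex by blast
  moreover from this a have "w \<in> ks m" by (simp add: in_keys_iff)
  ultimately show ?thesis unfolding vars_def by blast
qed

lemma cls_pos: "0 < cls F \<Longrightarrow> 0 < deg F (Inr (cls F))"
proof -
  assume a: "0 < cls F"
  let ?S = "{p. 0 < deg F (Inr p)}"
  have "?S \<subseteq> Inr -` vars F" using deg_pos_vars by auto
  moreover have "finite (Inr -` vars F)" by (rule finite_vimageI) (auto simp: finite_vars)
  ultimately have fin: "finite ?S" by (rule finite_subset)
  have "cls F \<in> insert 0 ?S" unfolding cls_def by (rule Max_in) (use fin in auto)
  with a show ?thesis by auto
qed

lemma init_phi: "init F = lead_coeff (phi (Inr (cls F)) F)"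
  unfolding init_def Let_def degree_phi coeff_phi
  by (rule sum.cong) (auto simp: rest_def)

lemma prem_unique:
  fixes F :: "'k::field mpoly"
  assumes M: "0 < deg F v"
    and R1: "deg R1 v < deg F v" "I * G = Q1 * F + R1"
    and R2: "deg R2 v < deg F v" "I * G = Q2 * F + R2"
  shows "R1 = R2"
proof -
  have "(Q1 - Q2) * F = R2 - R1" using R1(2) R2(2) by (simp add: algebra_simps)
  then have eq: "(phi v Q1 - phi v Q2) * phi v F = phi v R2 - phi v R1"
    by (metis phi_diff phi_mult)
  have dr: "degree (phi v R2 - phi v R1) < deg F v"
    by (rule degree_diff_less) (use R1 R2 in \<open>simp_all add: degree_phi\<close>)
  have "phi v Q1 - phi v Q2 = 0"
  proof (rule ccontr)
    assume nz: "phi v Q1 - phi v Q2 \<noteq> 0"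
    have "phi v F \<noteq> 0" using M degree_phi[of v F] by auto
    then have "degree ((phi v Q1 - phi v Q2) * phi v F) = degree (phi v Q1 - phi v Q2) + deg F v"
      using nz by (simp add: degree_mult_eq degree_phi)
    with eq dr show False by simp
  qed
  with eq have "phi v R1 = phi v R2" by simp
  then show ?thesis by (metis psi_phi)
qed

lemma psi_hom:
  shows psi_add: "psi v (p + q) = psi v p + psi v q"
  and psi_mult: "psi v (p * q) = psi v p * psi v q"
  and psi_smult: "psi v (smult c p) = c * psi v p"
  and psi_zero: "psi v 0 = 0"
  by (simp_all add: psi_def)

lemma prem_exists:
  fixes F :: "'k::field mpoly"
  assumes M: "0 < deg F v"
  shows "\<exists>R Q. deg R v < deg F v \<and> lead_coeff (phi v F) ^ (deg G v + 1 - deg F v) * G = Q * F + R"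
proof -
  let ?g = "phi v F"
  have g0: "?g \<noteq> 0" using M degree_phi[of v F] by auto
  obtain q r where pd: "pseudo_divmod (phi v G) ?g = (q, r)" by (metis surj_pair)
  note pdm = pseudo_divmod[OF g0 pd]
  let ?s = "deg G v + 1 - deg F v"
  let ?c = "lead_coeff (phi v F)"
  have "smult (?c ^ ?s) (phi v G) = ?g * q + r"
    using pdm(1) by (simp add: degree_phi)
  then have "mp v (smult (?c ^ ?s) (phi v G)) = mp v (?g * q + r)" by simp
  then have "smult (?c ^ ?s) (phi v G) = ?g * mp v q + mp v r"
    by (simp add: mp_smult mp_add mp_mult mp_phi hom_rho_power rho_id vfree_coeff_phi)
  then have "psi v (smult (?c ^ ?s) (phi v G)) = psi v (?g * mp v q + mp v r)" by simp
  then have eq: "?c ^ ?s * G = psi v (mp v q) * F + psi v (mp v r)"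
    by (simp add: psi_add psi_mult psi_smult psi_phi mult.commute)
  have "deg (psi v (mp v r)) v < deg F v"
  proof (cases "r = 0")
    case True then show ?thesis using M by (simp add: mp_zero psi_zero)
  next
    case False
    then have "degree r < deg F v" using pdm(2) by (simp add: degree_phi)
    moreover have "deg (psi v (mp v r)) v \<le> degree (mp v r)"
      by (rule deg_psi) (rule coeff_mp_vfree)
    moreover note degree_mp[of v r]
    ultimately show ?thesis by linarith
  qed
  with eq show ?thesis by blast
qed

lemma prem_spec:
  fixes F G :: "'k::field mpoly"
  assumes "0 < cls F"
  shows "deg (prem G F) (Inr (cls F)) < deg F (Inr (cls F)) \<and>
    (\<exists>Q. init F ^ (deg G (Inr (cls F)) + 1 - deg F (Inr (cls F))) * G = Q * F + prem G F)"
proof -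
  let ?v = "Inr (cls F)"
  let ?P = "\<lambda>R. deg R ?v < deg F ?v \<and> (\<exists>Q. init F ^ (deg G ?v + 1 - deg F ?v) * G = Q * F + R)"
  have M: "0 < deg F ?v" using cls_pos assms by blast
  have ex: "\<exists>!R. ?P R"
  proof -
    obtain R Q where "deg R ?v < deg F ?v" "init F ^ (deg G ?v + 1 - deg F ?v) * G = Q * F + R"
      using prem_exists[OF M, of G] init_phi[of F] by auto
    then have "?P R" by blast
    moreover have "\<And>R'. ?P R' \<Longrightarrow> R' = R"
      using prem_unique[OF M] \<open>?P R\<close> by blast
    ultimately show ?thesis by blast
  qed
  have "prem G F = (THE R. ?P R)"
    using assms by (simp add: prem_def Let_def)
  with theI'[OF ex] show ?thesis by simp
qed




lemma eval_add: "eval p (F + G) = eval p F + eval p G"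
  and eval_mult: "eval p (F * G) = eval p F * eval p G"
  and eval_sum: "eval p (sum g A) = (\<Sum>i\<in>A. eval p (g i))"
  and eval_prod: "eval p (prod g A) = (\<Prod>i\<in>A. eval p (g i))"
  and eval_power: "eval p (F ^ k) = eval p F ^ k"
  and eval_zero: "eval p 0 = 0"
  unfolding eval_ev
  by (rule hom.ev_add[OF hom_to_ac] hom.ev_mult[OF hom_to_ac] hom.ev_sum[OF hom_to_ac]
      hom.ev_prod[OF hom_to_ac] hom.ev_power[OF hom_to_ac] hom.ev_zero[OF hom_to_ac])+

lemma eval_vars:
  assumes a: "\<And>w. w \<in> vars F \<Longrightarrow> p w = p' w" shows "eval p F = eval p' F"
  unfolding eval_def
proof (rule sum.cong[OF refl])
  fix m assume m: "m \<in> ks F"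
  have "(\<Prod>v\<in>ks m. p v ^ lk m v) = (\<Prod>v\<in>ks m. p' v ^ lk m v)"
  proof (rule prod.cong[OF refl])
    fix w assume "w \<in> ks m"
    with m have "w \<in> vars F" unfolding vars_def by blast
    then show "p w ^ lk m w = p' w ^ lk m w" using a by simp
  qed
  then show "to_ac (lk F m) * (\<Prod>v\<in>ks m. p v ^ lk m v) = to_ac (lk F m) * (\<Prod>v\<in>ks m. p' v ^ lk m v)" by simp
qed

lemma prem_eval:
  fixes c r :: "'k::field mpoly"
  assumes "0 < cls c" "eval p c = 0" "eval p (init c) \<noteq> 0" "eval p (prem r c) = 0"
  shows "eval p r = 0"
proof -
  obtain Q where "init c ^ (deg r (Inr (cls c)) + 1 - deg c (Inr (cls c))) * r = Q * c + prem r c"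
    using prem_spec[OF assms(1)] by blast
  then have "eval p (init c) ^ (deg r (Inr (cls c)) + 1 - deg c (Inr (cls c))) * eval p r = 0"
    by (metis assms(2,4) eval_add eval_mult eval_power mult_zero_right add_0)
  with assms(3) show ?thesis by simp
qed

lemma foldr_prem_eval:
  fixes G :: "'k::field mpoly"
  assumes "\<And>c. c \<in> set L \<Longrightarrow> 0 < cls c \<and> eval p c = 0 \<and> eval p (init c) \<noteq> 0"
    and "eval p (foldr (\<lambda>c r. prem r c) L G) = 0"
  shows "eval p G = 0"
  using assms
proof (induction L)
  case Nil then show ?case by simp
next
  case (Cons c L)
  have "eval p (foldr (\<lambda>c r. prem r c) L G) = 0"
    using Cons.prems(1)[of c] Cons.prems(2) by (auto intro: prem_eval)
  then show ?case using Cons by auto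
qed

context linorder begin
lemma set_skl: "inj_on f S \<Longrightarrow> A \<subseteq> S \<Longrightarrow> finite A \<Longrightarrow> set (sorted_key_list_of_set f A) = A"
proof -
  assume "inj_on f S" "A \<subseteq> S" "finite A"
  then interpret folding_insort_key "(\<le>)" "(<)" S f by unfold_locales
  show ?thesis using \<open>A \<subseteq> S\<close> \<open>finite A\<close> by (rule set_sorted_key_list_of_set)
qed
end

lemma prem_chain_eval:
  fixes G :: "'k::field mpoly"
  assumes "inj_on cls C" "finite C"
    and "\<And>c. c \<in> C \<Longrightarrow> 0 < cls c \<and> eval p c = 0 \<and> eval p (init c) \<noteq> 0"
    and "prem_chain G C = 0"
  shows "eval p G = 0"
proof -
  have "set (sorted_key_list_of_set cls C) = C"
    by (rule set_skl) (use assms(1,2) in auto)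
  note setL = this
  have L: "\<And>c. c \<in> set (sorted_key_list_of_set cls C) \<Longrightarrow> 0 < cls c \<and> eval p c = 0 \<and> eval p (init c) \<noteq> 0"
    using assms(3) unfolding setL .
  have "eval p (foldr (\<lambda>c r. prem r c) (sorted_key_list_of_set cls C) G) = 0"
    using assms(4) unfolding prem_chain_def by (simp only: eval_zero)
  then show ?thesis using foldr_prem_eval[of "sorted_key_list_of_set cls C" p G] L by blast
qed

lemma ideal_eval:
  assumes "F \<in> ideal_KUX d n P" "\<And>G. G \<in> P \<Longrightarrow> eval p G = 0"
  shows "eval p F = 0"
proof -
  from assms(1) obtain S q where "F = (\<Sum>p\<in>S. q p * p)" "S \<subseteq> P" unfolding ideal_KUX_def by blast
  then show ?thesis using assms(2) by (auto simp: eval_sum eval_mult intro!: sum.neutral)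
qed




lemma KU_cls: "F \<in> KU d \<Longrightarrow> cls F = 0"
proof -
  assume F: "F \<in> KU d"
  have "{p. 0 < deg F (Inr p)} = {}"
  proof (rule ccontr)
    assume "{p. 0 < deg F (Inr p)} \<noteq> {}"
    then obtain p where "0 < deg F (Inr p)" by blast
    then have "Inr p \<in> vars F" by (rule deg_pos_vars)
    with F show False unfolding KU_def by blast
  qed
  then show ?thesis unfolding cls_def by simp
qed

lemma contra_not_noncontra: "contra_chain d C \<Longrightarrow> \<not> noncontra_chain C"
  unfolding contra_chain_def noncontra_chain_def using KU_cls by fastforce

lemma KU_eval: "F \<in> KU d \<Longrightarrow> eval (pt a b) F = eval (pt a b') F"
  by (rule eval_vars) (auto simp: KU_def pt_def)

lemma main:
  fixes P :: "'k::field mpoly set"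
  assumes "wu_decomp d n P D"
  shows "a \<notin> (\<Union>CS\<in>{C\<in>D. contra_chain d C}. VU CS) \<Longrightarrow>
    V a P = (\<Union>C\<in>{C\<in>D. noncontra_chain C}. V_spec a C (chain_init C))"
  using assms
proof (induction rule: wu_decomp.induct)
  case (contra P C)
  then obtain F where F: "C = {F}" "F \<noteq> 0" "F \<in> KU d" unfolding contra_chain_def by blast
  have "a \<notin> VU C" using contra.prems contra.hyps(2) by auto
  then have aF: "eval (pt a (\<lambda>_. 0)) F \<noteq> 0" unfolding VU_def F by simp
  have "V a P = {}"
  proof (rule ccontr)
    assume "V a P \<noteq> {}"
    then obtain b where b: "b \<in> V a P" by blast
    have "F \<in> ideal_KUX d n P" using contra.hyps(1) F unfolding char_set_def by auto
    then have "eval (pt a b) F = 0" by (rule ideal_eval) (use b in \<open>auto simp: V_def\<close>)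
    with aF KU_eval[OF F(3), of a b "\<lambda>_. 0"] show False by simp
  qed
  moreover have "{C'\<in>{C}. noncontra_chain C'} = {}"
    using contra_not_noncontra[OF contra.hyps(2)] by auto
  ultimately show ?case by simp
next
  case (noncontra P C Ds)
  have IH: "\<And>c. c \<in> C \<Longrightarrow> V a (P \<union> C \<union> {init c}) =
      (\<Union>C'\<in>{C'\<in>Ds c. noncontra_chain C'}. V_spec a C' (chain_init C'))"
  proof -
    fix c assume c: "c \<in> C"
    have "a \<notin> (\<Union>CS\<in>{C'\<in>Ds c. contra_chain d C'}. VU CS)"
      using noncontra.prems c by auto
    then show "V a (P \<union> C \<union> {init c}) =
      (\<Union>C'\<in>{C'\<in>Ds c. noncontra_chain C'}. V_spec a C' (chain_init C'))"
      using noncontra.IH c by blast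
  qed
  have nc: "finite C" "inj_on cls C" "\<And>c. c \<in> C \<Longrightarrow> 0 < cls c"
    using noncontra.hyps(2) unfolding noncontra_chain_def by auto
  have cs: "C \<subseteq> ideal_KUX d n P" "\<And>G. G \<in> P \<Longrightarrow> prem_chain G C = 0"
    using noncontra.hyps(1) unfolding char_set_def by auto
  have key: "V a P = V_spec a C (chain_init C) \<union> (\<Union>c\<in>C. V a (P \<union> C \<union> {init c}))"
  proof (intro equalityI subsetI)
    fix b assume b: "b \<in> V a P"
    then have bP: "\<And>G. G \<in> P \<Longrightarrow> eval (pt a b) G = 0" unfolding V_def by auto
    have bC: "\<And>c. c \<in> C \<Longrightarrow> eval (pt a b) c = 0"
      using cs(1) bP by (auto intro: ideal_eval)
    show "b \<in> V_spec a C (chain_init C) \<union> (\<Union>c\<in>C. V a (P \<union> C \<union> {init c}))"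
    proof (cases "eval (pt a b) (chain_init C) = 0")
      case True
      then have "(\<Prod>c\<in>C. eval (pt a b) (init c)) = 0"
        unfolding chain_init_def eval_prod .
      then obtain c where c: "c \<in> C" "eval (pt a b) (init c) = 0"
        using nc(1) by auto
      then have "b \<in> V a (P \<union> C \<union> {init c})" using bP bC unfolding V_def by auto
      with c show ?thesis by blast
    next
      case False
      then have "b \<in> V_spec a C (chain_init C)" using bC unfolding V_spec_def by auto
      then show ?thesis by blast
    qed
  next
    fix b assume "b \<in> V_spec a C (chain_init C) \<union> (\<Union>c\<in>C. V a (P \<union> C \<union> {init c}))"
    then show "b \<in> V a P"
    proof
      assume b: "b \<in> V_spec a C (chain_init C)"
      then have bC: "\<And>c. c \<in> C \<Longrightarrow> eval (pt a b) c = 0" unfolding V_spec_def by auto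
      from b have "(\<Prod>c\<in>C. eval (pt a b) (init c)) \<noteq> 0"
        unfolding V_spec_def chain_init_def eval_prod by auto
      then have bI: "\<And>c. c \<in> C \<Longrightarrow> eval (pt a b) (init c) \<noteq> 0"
        using nc(1) by auto
      show "b \<in> V a P" unfolding V_def
      proof (intro CollectI ballI)
        fix G assume "G \<in> P"
        show "eval (pt a b) G = 0"
          by (rule prem_chain_eval[OF nc(2) nc(1) _ cs(2)[OF \<open>G \<in> P\<close>]])
             (use nc(3) bC bI in blast)
      qed
    next
      assume "b \<in> (\<Union>c\<in>C. V a (P \<union> C \<union> {init c}))"
      then show "b \<in> V a P" unfolding V_def by auto
    qed
  qed
  have "{C'\<in>{C} \<union> (\<Union>c\<in>C. Ds c). noncontra_chain C'} =
        {C} \<union> (\<Union>c\<in>C. {C'\<in>Ds c. noncontra_chain C'})"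
    using noncontra.hyps(2) by auto
  then have "(\<Union>C'\<in>{C'\<in>{C} \<union> (\<Union>c\<in>C. Ds c). noncontra_chain C'}. V_spec a C' (chain_init C')) =
     V_spec a C (chain_init C) \<union> (\<Union>c\<in>C. \<Union>C'\<in>{C'\<in>Ds c. noncontra_chain C'}. V_spec a C' (chain_init C'))"
    by auto
  also have "\<dots> = V_spec a C (chain_init C) \<union> (\<Union>c\<in>C. V a (P \<union> C \<union> {init c}))"
    using IH by auto
  finally show ?case using key by simp
qed

theorem corollary2:
  fixes P :: "'k::field mpoly set" and D :: "'k mpoly set set"
    and d n :: nat and a :: "nat \<Rightarrow> 'k alg_closure"
  assumes "parametric_system d n P"
    and "wu_decomp d n P D"
    and "a \<notin> (\<Union>CS\<in>{C\<in>D. contra_chain d C}. VU CS)"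
  shows "V a P = (\<Union>C\<in>{C\<in>D. noncontra_chain C}. V_spec a C (chain_init C))"
  using main[OF assms(2) assms(3)] .


end
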